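(* Consider the second-order Kuramoto model with bonding force $$\dot\theta_i=\omega_i,\qquad \dot\omega_i=\frac{1}{N}\sum_{j=1}^N\big[\kappa_0\cos(\theta_j-\theta_i)+\kappa_1\big](\omega_j-\omega_i)+\frac{\kappa_2}{N}\sum_{j=1}^N\big[|\theta_j-\theta_i|-\theta^\infty_{ij}\big]\operatorname{sgn}(\theta_j-\theta_i),\quad i\in[N].$$ Suppose the initial data and parameters satisfy $$(\Theta^0,W^0)\in\mathcal{S},\quad \mathcal{E}(0)<\frac{\kappa_2\big(\min_{i\ne j}\theta^\infty_{ij}\big)^2}{2N},\quad \kappa_0\cos\mathcal{U}+\kappa_1>0,\quad \kappa_2>0,$$ and for $\tau\in(0,\infty]$ let $\{(\theta_i,\omega_i)\}$ be a smooth solution on $[0,\tau)$. Then no collision occurs between any pair of distinct oscillators on $[0,\tau]$: $\theta_i(t)\ne\theta_j(t)$ for all $i\ne j$ and $t\in[0,\tau)$, and no pair collides in the limit $t\to\tau^-$ (i.e. it is not the case that $\theta_i(t)-\theta_j(t)\to0$ as $t\to\tau^-$ for some $i\neq j$).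
   Context: $N\ge2$, $[N]=\{1,\dots,N\}$, $\kappa_0,\kappa_1\ge0$, $\kappa_2>0$; $[\theta^\infty_{ij}]$ real $N\times N$ matrix with $\theta^\infty_{ii}=0$, $\theta^\infty_{ij}=\theta^\infty_{ji}$; $\operatorname{sgn}$ is the sign function; $(\Theta^0,W^0)=(\theta_i(0),\omega_i(0))_{i}$. Energy: $\mathcal{E}:=\frac12\sum_i|\omega_i|^2+\frac{\kappa_2}{4N}\sum_{i,j}(|\theta_j-\theta_i|-\theta^\infty_{ij})^2$. $\mathcal{U}:=\max_{i\ne j}\theta^\infty_{ij}+\sqrt{2N\mathcal{E}(0)/\kappa_2}$, and $\mathcal{S}:=\{(\Theta,W)\in\mathbb{R}^{2N}:|\theta_i-\theta_j|<\mathcal{U}<\pi\ \forall i,j\}$. *)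

theory Defs
  imports "HOL-Analysis.Analysis"
begin

definition kur_energy ::
  "nat \<Rightarrow> real \<Rightarrow> (nat \<Rightarrow> nat \<Rightarrow> real) \<Rightarrow> (nat \<Rightarrow> real) \<Rightarrow> (nat \<Rightarrow> real) \<Rightarrow> real" where
  "kur_energy N k2 thinf Th W =
     (1/2) * (\<Sum>i\<in>{1..N}. (W i)^2)
     + k2 / (4 * real N) * (\<Sum>i\<in>{1..N}. \<Sum>j\<in>{1..N}. (\<bar>Th j - Th i\<bar> - thinf i j)^2)"

definition kur_U ::
  "nat \<Rightarrow> real \<Rightarrow> (nat \<Rightarrow> nat \<Rightarrow> real) \<Rightarrow> real \<Rightarrow> real" where
  "kur_U N k2 thinf E0 =
     Max {thinf i j | i j. i \<in> {1..N} \<and> j \<in> {1..N} \<and> i \<noteq> j} + sqrt (2 * real N * E0 / k2)"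

definition kur_min_thinf :: "nat \<Rightarrow> (nat \<Rightarrow> nat \<Rightarrow> real) \<Rightarrow> real" where
  "kur_min_thinf N thinf = Min {thinf i j | i j. i \<in> {1..N} \<and> j \<in> {1..N} \<and> i \<noteq> j}"

definition kur_S :: "nat \<Rightarrow> real \<Rightarrow> (nat \<Rightarrow> real) \<Rightarrow> bool" where
  "kur_S N U Th \<longleftrightarrow> (\<forall>i\<in>{1..N}. \<forall>j\<in>{1..N}. \<bar>Th i - Th j\<bar> < U) \<and> U < pi"

definition kur_rhs ::
  "nat \<Rightarrow> real \<Rightarrow> real \<Rightarrow> real \<Rightarrow> (nat \<Rightarrow> nat \<Rightarrow> real) \<Rightarrow> (nat \<Rightarrow> real) \<Rightarrow> (nat \<Rightarrow> real) \<Rightarrow> nat \<Rightarrow> real" where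
  "kur_rhs N k0 k1 k2 thinf Th W i =
     (1 / real N) * (\<Sum>j\<in>{1..N}. (k0 * cos (Th j - Th i) + k1) * (W j - W i))
     + k2 / real N * (\<Sum>j\<in>{1..N}. (\<bar>Th j - Th i\<bar> - thinf i j) * sgn (Th j - Th i))"

end

theory Submission
  imports Defs
begin

lemma absterm_deriv:
  fixes g :: "real \<Rightarrow> real"
  assumes g: "(g has_real_derivative g') (at t within S)" and nz: "g t \<noteq> 0"
  shows "((\<lambda>t. (\<bar>g t\<bar> - c)^2) has_real_derivative 2 * (\<bar>g t\<bar> - c) * sgn (g t) * g') (at t within S)"
proof -
  have e: "(\<lambda>t. (\<bar>g t\<bar> - c)^2) = (\<lambda>t. (sqrt ((g t)^2) - c)^2)" by simp
  have pos: "0 < (g t)^2" using nz by simp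
  have d: "((\<lambda>t. sqrt ((g t)^2)) has_real_derivative inverse (sqrt ((g t)^2)) / 2 * (2 * g t * g')) (at t within S)"
    apply (rule DERIV_chain2[of sqrt _ "\<lambda>t. (g t)^2", OF DERIV_real_sqrt[OF pos]])
    using DERIV_power[OF g, of 2] by (simp add: mult_ac)
  have "((\<lambda>t. (sqrt ((g t)^2) - c)^2) has_real_derivative 2 * (sqrt ((g t)^2) - c) * (inverse (sqrt ((g t)^2)) / 2 * (2 * g t * g'))) (at t within S)"
    using DERIV_power[OF DERIV_diff[OF d DERIV_const[of c]], of 2] by (simp add: algebra_simps)
  moreover have "2 * (sqrt ((g t)^2) - c) * (inverse (sqrt ((g t)^2)) / 2 * (2 * g t * g')) = 2 * (\<bar>g t\<bar> - c) * sgn (g t) * g'"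
    using nz by (simp add: sgn_if field_simps abs_if)
  ultimately show ?thesis by (simp only: e)
qed

lemma sym_quad:
  fixes a :: "nat \<Rightarrow> nat \<Rightarrow> real"
  assumes "finite I" "\<And>i j. i \<in> I \<Longrightarrow> j \<in> I \<Longrightarrow> a i j = a j i"
  shows "(\<Sum>i\<in>I. \<Sum>j\<in>I. a i j * (w j - w i) * w i) = -(1/2) * (\<Sum>i\<in>I. \<Sum>j\<in>I. a i j * (w j - w i)^2)"
proof -
  let ?L = "(\<Sum>i\<in>I. \<Sum>j\<in>I. a i j * (w j - w i) * w i)"
  have "?L = (\<Sum>j\<in>I. \<Sum>i\<in>I. a i j * (w j - w i) * w i)" by (rule sum.swap)
  also have "\<dots> = (\<Sum>i\<in>I. \<Sum>j\<in>I. a i j * (w i - w j) * w j)"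
    using assms(2) by (intro sum.cong refl) auto
  finally have "2 * ?L = (\<Sum>i\<in>I. \<Sum>j\<in>I. a i j * (w j - w i) * w i) + (\<Sum>i\<in>I. \<Sum>j\<in>I. a i j * (w i - w j) * w j)" by simp
  also have "\<dots> = (\<Sum>i\<in>I. \<Sum>j\<in>I. a i j * (w j - w i) * w i + a i j * (w i - w j) * w j)"
    by (simp add: sum.distrib)
  also have "\<dots> = (\<Sum>i\<in>I. \<Sum>j\<in>I. - (a i j * (w j - w i)^2))"
    by (intro sum.cong refl) (simp add: power2_eq_square algebra_simps)
  also have "\<dots> = - (\<Sum>i\<in>I. \<Sum>j\<in>I. a i j * (w j - w i)^2)" by (simp add: sum_negf)
  finally show ?thesis by simp
qed

lemma antisym_sum:
  fixes b :: "nat \<Rightarrow> nat \<Rightarrow> real"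
  assumes "finite I" "\<And>i j. i \<in> I \<Longrightarrow> j \<in> I \<Longrightarrow> b i j = - b j i"
  shows "(\<Sum>i\<in>I. \<Sum>j\<in>I. b i j * (w j - w i)) = -2 * (\<Sum>i\<in>I. \<Sum>j\<in>I. b i j * w i)"
proof -
  have "(\<Sum>i\<in>I. \<Sum>j\<in>I. b i j * w j) = (\<Sum>j\<in>I. \<Sum>i\<in>I. b i j * w j)" by (rule sum.swap)
  also have "\<dots> = (\<Sum>i\<in>I. \<Sum>j\<in>I. - (b i j * w i))"
  proof (intro sum.cong refl)
    fix i j assume "i \<in> I" "j \<in> I"
    then show "b j i * w i = - (b i j * w i)" using assms(2)[of j i] by simp
  qed
  also have "\<dots> = - (\<Sum>i\<in>I. \<Sum>j\<in>I. b i j * w i)" by (simp add: sum_negf)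
  finally have e: "(\<Sum>i\<in>I. \<Sum>j\<in>I. b i j * w j) = - (\<Sum>i\<in>I. \<Sum>j\<in>I. b i j * w i)" .
  have "(\<Sum>i\<in>I. \<Sum>j\<in>I. b i j * (w j - w i)) = (\<Sum>i\<in>I. \<Sum>j\<in>I. b i j * w j) - (\<Sum>i\<in>I. \<Sum>j\<in>I. b i j * w i)"
    by (simp add: algebra_simps sum_subtractf)
  then show ?thesis using e by simp
qed

lemma D_nonpos:
  fixes a b :: "nat \<Rightarrow> nat \<Rightarrow> real" and n k :: real
  assumes fin: "finite I" and sa: "\<And>i j. i \<in> I \<Longrightarrow> j \<in> I \<Longrightarrow> a i j = a j i"
    and an: "\<And>i j. i \<in> I \<Longrightarrow> j \<in> I \<Longrightarrow> 0 \<le> a i j"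
    and ab: "\<And>i j. i \<in> I \<Longrightarrow> j \<in> I \<Longrightarrow> b i j = - b j i"
    and n: "n > 0"
  shows "1/2 * (\<Sum>i\<in>I. 2 * w i * ((1/n) * (\<Sum>j\<in>I. a i j * (w j - w i)) + k/n * (\<Sum>j\<in>I. b i j)))
     + k/(4*n) * (\<Sum>i\<in>I. \<Sum>j\<in>I. 2 * b i j * (w j - w i)) \<le> 0"
proof -
  have e1: "1/2 * (\<Sum>i\<in>I. 2 * w i * ((1/n) * (\<Sum>j\<in>I. a i j * (w j - w i)) + k/n * (\<Sum>j\<in>I. b i j)))
    = (1/n) * (\<Sum>i\<in>I. \<Sum>j\<in>I. a i j * (w j - w i) * w i) + k/n * (\<Sum>i\<in>I. \<Sum>j\<in>I. b i j * w i)"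
  proof -
    have "\<And>i. 1/2 * (2 * w i * ((1/n) * (\<Sum>j\<in>I. a i j * (w j - w i)) + k/n * (\<Sum>j\<in>I. b i j)))
       = (1/n) * (\<Sum>j\<in>I. a i j * (w j - w i) * w i) + k/n * (\<Sum>j\<in>I. b i j * w i)"
    proof -
      fix i
      have x1: "(\<Sum>j\<in>I. a i j * (w j - w i)) * w i = (\<Sum>j\<in>I. a i j * (w j - w i) * w i)"
        by (rule sum_distrib_right)
      have x2: "(\<Sum>j\<in>I. b i j) * w i = (\<Sum>j\<in>I. b i j * w i)"
        by (rule sum_distrib_right)
      show "1/2 * (2 * w i * ((1/n) * (\<Sum>j\<in>I. a i j * (w j - w i)) + k/n * (\<Sum>j\<in>I. b i j)))
       = (1/n) * (\<Sum>j\<in>I. a i j * (w j - w i) * w i) + k/n * (\<Sum>j\<in>I. b i j * w i)"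
        unfolding x1[symmetric] x2[symmetric] by (simp add: algebra_simps)
    qed
    then have "1/2 * (\<Sum>i\<in>I. 2 * w i * ((1/n) * (\<Sum>j\<in>I. a i j * (w j - w i)) + k/n * (\<Sum>j\<in>I. b i j)))
       = (\<Sum>i\<in>I. (1/n) * (\<Sum>j\<in>I. a i j * (w j - w i) * w i) + k/n * (\<Sum>j\<in>I. b i j * w i))"
      unfolding sum_distrib_left by (rule sum.cong[OF refl])
    then show ?thesis by (simp only: sum.distrib sum_distrib_left)
  qed
  have e2: "(\<Sum>i\<in>I. \<Sum>j\<in>I. 2 * b i j * (w j - w i)) = 2 * (\<Sum>i\<in>I. \<Sum>j\<in>I. b i j * (w j - w i))"
    unfolding sum_distrib_left by (simp only: mult.assoc)
  have nn: "0 \<le> (\<Sum>i\<in>I. \<Sum>j\<in>I. a i j * (w j - w i)^2)"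
    using an by (intro sum_nonneg) auto
  have q: "(\<Sum>i\<in>I. \<Sum>j\<in>I. a i j * (w j - w i) * w i) = -(1/2) * (\<Sum>i\<in>I. \<Sum>j\<in>I. a i j * (w j - w i)^2)"
    by (rule sym_quad[OF fin sa])
  have r: "(\<Sum>i\<in>I. \<Sum>j\<in>I. b i j * (w j - w i)) = -2 * (\<Sum>i\<in>I. \<Sum>j\<in>I. b i j * w i)"
    by (rule antisym_sum[OF fin ab])
  have aux: "\<And>Q B. Q \<ge> 0 \<Longrightarrow> 1/n*(-(1/2)*Q) + k/n*B + k/(4*n)*(2*(-2*B)) \<le> 0"
  proof -
    fix Q B :: real assume "Q \<ge> 0"
    have "k/(4*n)*(2*(-2*B)) = - (k/n*B)" using n by (simp add: field_simps)
    moreover have "1/n*(-(1/2)*Q) \<le> 0" using n \<open>Q \<ge> 0\<close> by (simp add: divide_nonneg_pos)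
    ultimately show "1/n*(-(1/2)*Q) + k/n*B + k/(4*n)*(2*(-2*B)) \<le> 0" by linarith
  qed
  have "1/2 * (\<Sum>i\<in>I. 2 * w i * ((1/n) * (\<Sum>j\<in>I. a i j * (w j - w i)) + k/n * (\<Sum>j\<in>I. b i j)))
     + k/(4*n) * (\<Sum>i\<in>I. \<Sum>j\<in>I. 2 * b i j * (w j - w i)) =
     1/n*(-(1/2)*(\<Sum>i\<in>I. \<Sum>j\<in>I. a i j * (w j - w i)^2)) + k/n*(\<Sum>i\<in>I. \<Sum>j\<in>I. b i j * w i)
      + k/(4*n)*(2*(-2*(\<Sum>i\<in>I. \<Sum>j\<in>I. b i j * w i)))"
    by (simp only: e1 e2 q r)
  also have "\<dots> \<le> 0" by (rule aux[OF nn])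
  finally show ?thesis .
qed

theorem theorem3p1:
  fixes N :: nat and k0 k1 k2 :: real and thinf :: "nat \<Rightarrow> nat \<Rightarrow> real"
    and th om :: "nat \<Rightarrow> real \<Rightarrow> real" and \<tau> :: ereal
  assumes N2: "N \<ge> 2"
    and k0: "k0 \<ge> 0" and k1: "k1 \<ge> 0" and k2: "k2 > 0"
    and diag: "\<And>i. i \<in> {1..N} \<Longrightarrow> thinf i i = 0"
    and symm: "\<And>i j. i \<in> {1..N} \<Longrightarrow> j \<in> {1..N} \<Longrightarrow> thinf i j = thinf j i"
    and tau: "\<tau> > 0"
    and ode_th: "\<And>i t. i \<in> {1..N} \<Longrightarrow> 0 \<le> t \<Longrightarrow> ereal t < \<tau> \<Longrightarrow>
        ((th i) has_real_derivative (om i t)) (at t within {s. 0 \<le> s \<and> ereal s < \<tau>})"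
    and ode_om: "\<And>i t. i \<in> {1..N} \<Longrightarrow> 0 \<le> t \<Longrightarrow> ereal t < \<tau> \<Longrightarrow>
        ((om i) has_real_derivative
           (kur_rhs N k0 k1 k2 thinf (\<lambda>j. th j t) (\<lambda>j. om j t) i))
          (at t within {s. 0 \<le> s \<and> ereal s < \<tau>})"
    and inS: "kur_S N (kur_U N k2 thinf (kur_energy N k2 thinf (\<lambda>j. th j 0) (\<lambda>j. om j 0)))
                 (\<lambda>j. th j 0)"
    and E0: "kur_energy N k2 thinf (\<lambda>j. th j 0) (\<lambda>j. om j 0)
               < k2 * (kur_min_thinf N thinf)^2 / (2 * real N)"
    and coupling: "k0 * cos (kur_U N k2 thinf (kur_energy N k2 thinf (\<lambda>j. th j 0) (\<lambda>j. om j 0)))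
                     + k1 > 0"
  shows "(\<forall>i\<in>{1..N}. \<forall>j\<in>{1..N}. i \<noteq> j \<longrightarrow>
            (\<forall>t. 0 \<le> t \<and> ereal t < \<tau> \<longrightarrow> th i t \<noteq> th j t))
       \<and> (\<forall>i\<in>{1..N}. \<forall>j\<in>{1..N}. i \<noteq> j \<longrightarrow>
            (\<tau> = \<infinity> \<longrightarrow> \<not> ((\<lambda>t. th i t - th j t) \<longlongrightarrow> 0) at_top)
          \<and> (\<tau> \<noteq> \<infinity> \<longrightarrow> \<not> ((\<lambda>t. th i t - th j t) \<longlongrightarrow> 0) (at_left (real_of_ereal \<tau>))))"
proof -
  define E0 where "E0 = kur_energy N k2 thinf (\<lambda>j. th j 0) (\<lambda>j. om j 0)"
  define U where "U = kur_U N k2 thinf E0"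
  define m where "m = kur_min_thinf N thinf"
  define r where "r = sqrt (2 * real N * E0 / k2)"
  define S where "S = {s. 0 \<le> s \<and> ereal s < \<tau>}"
  define E where "E t = kur_energy N k2 thinf (\<lambda>j. th j t) (\<lambda>j. om j t)" for t
  define I where "I = {1..N}"
  define Th where "Th = {thinf i j | i j. i \<in> {1..N} \<and> j \<in> {1..N} \<and> i \<noteq> j}"
  have finI: "finite I" unfolding I_def by simp
  have Npos: "real N > 0" using N2 by simp
  have U_eq: "U = Max Th + r" unfolding U_def kur_U_def Th_def r_def by simp
  have m_eq: "m = Min Th" unfolding m_def kur_min_thinf_def Th_def by simp
  have finTh: "finite Th"
  proof -
    have "Th \<subseteq> (\<lambda>(i,j). thinf i j) ` ({1..N} \<times> {1..N})" unfolding Th_def by auto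
    then show ?thesis by (rule finite_subset) simp
  qed
  have "thinf 1 2 \<in> Th" unfolding Th_def using N2 by force
  then have neTh: "Th \<noteq> {}" by auto
  have m_le: "m \<le> thinf i j" if "i \<in> I" "j \<in> I" "i \<noteq> j" for i j
    unfolding m_eq using that finTh by (intro Min_le) (auto simp: Th_def I_def)
  have le_Max: "thinf i j \<le> Max Th" if "i \<in> I" "j \<in> I" "i \<noteq> j" for i j
    using that finTh by (intro Max_ge) (auto simp: Th_def I_def)
  obtain i0 j0 where ij0: "i0 \<in> I" "j0 \<in> I" "i0 \<noteq> j0" "thinf i0 j0 = m"
  proof -
    have "m \<in> Th" using Min_in[OF finTh neTh] m_eq by simp
    then obtain i j where "i \<in> {1..N}" "j \<in> {1..N}" "i \<noteq> j" "m = thinf i j"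
      unfolding Th_def by blast
    then show ?thesis using that unfolding I_def by metis
  qed
  have E_0: "E 0 = E0" unfolding E_def E0_def by simp
  have U_pi: "U < pi" using inS unfolding kur_S_def U_def E0_def by simp
  have coup: "k0 * cos U + k1 > 0" using coupling unfolding U_def E0_def by simp
  have E0lt: "E0 < k2 * m^2 / (2 * real N)" using E0 unfolding E0_def m_def by simp

  have pairbound: "k2 / (2 * real N) * (\<bar>th j t - th i t\<bar> - thinf i j)^2 \<le> E t"
    if "i \<in> I" "j \<in> I" "i \<noteq> j" for i j t
  proof -
    define f where "f i j = (\<bar>th j t - th i t\<bar> - thinf i j)^2" for i j
    have fnn: "0 \<le> f a b" for a b unfolding f_def by simp
    have fsym: "f j i = f i j" unfolding f_def using symm[of i j] that
      by (simp add: I_def abs_minus_commute)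
    have "f i j \<le> (\<Sum>b\<in>I. f i b)" using that finI fnn by (intro member_le_sum) auto
    moreover have "f j i \<le> (\<Sum>b\<in>I. f j b)" using that finI fnn by (intro member_le_sum) auto
    moreover have "(\<Sum>a\<in>{i,j}. \<Sum>b\<in>I. f a b) \<le> (\<Sum>a\<in>I. \<Sum>b\<in>I. f a b)"
      using that finI fnn by (intro sum_mono2) (auto intro: sum_nonneg)
    ultimately have "2 * f i j \<le> (\<Sum>a\<in>I. \<Sum>b\<in>I. f a b)" using that fsym by simp
    then have "k2 / (4 * real N) * (2 * f i j) \<le> k2 / (4 * real N) * (\<Sum>a\<in>I. \<Sum>b\<in>I. f a b)"
      using k2 Npos by (intro mult_left_mono) auto
    moreover have "0 \<le> (1/2) * (\<Sum>a\<in>I. (om a t)^2)" by (simp add: sum_nonneg)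
    ultimately have "k2 / (4 * real N) * (2 * f i j) \<le> E t"
      unfolding E_def kur_energy_def f_def I_def by linarith
    moreover have "k2 / (4 * real N) * (2 * f i j) = k2 / (2 * real N) * f i j" by simp
    ultimately show ?thesis unfolding f_def by simp
  qed
  have E0nn: "0 \<le> E0" unfolding E0_def kur_energy_def using k2
    by (intro add_nonneg_nonneg mult_nonneg_nonneg sum_nonneg) auto
  have mpos: "m > 0"
  proof (rule ccontr)
    assume "\<not> m > 0"
    then have "m \<le> 0" by simp
    have pb: "k2 / (2 * real N) * (\<bar>th j0 0 - th i0 0\<bar> - m)^2 \<le> E0"
      using pairbound[OF ij0(1-3), of 0] ij0(4) E_0 by simp
    have "(-m)^2 \<le> (\<bar>th j0 0 - th i0 0\<bar> - m)^2"
      using \<open>m \<le> 0\<close> by (intro power_mono) auto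
    then have "k2 / (2 * real N) * m^2 \<le> k2 / (2 * real N) * (\<bar>th j0 0 - th i0 0\<bar> - m)^2"
      using k2 Npos by (intro mult_left_mono) auto
    with pb E0lt show False by simp
  qed
  have r2: "r^2 = 2 * real N * E0 / k2" unfolding r_def using E0nn k2 Npos by simp
  have rnn: "0 \<le> r" unfolding r_def using E0nn k2 Npos by simp
  have rlt: "r < m"
  proof -
    have "2 * real N * E0 / k2 < m^2" using E0lt k2 Npos by (simp add: field_simps)
    then have "r^2 < m^2" using r2 by simp
    then show ?thesis using rnn mpos by (simp add: power_less_imp_less_base)
  qed
  have keybound: "m - r \<le> \<bar>th j t - th i t\<bar> \<and> \<bar>th j t - th i t\<bar> \<le> U"
    if "E t \<le> E0" "i \<in> I" "j \<in> I" "i \<noteq> j" for t i j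
  proof -
    have "k2 / (2 * real N) * (\<bar>th j t - th i t\<bar> - thinf i j)^2 \<le> E0"
      using pairbound[OF that(2-4), of t] that(1) by simp
    then have "(\<bar>th j t - th i t\<bar> - thinf i j)^2 \<le> 2 * real N * E0 / k2"
      using k2 Npos by (simp add: field_simps)
    then have "(\<bar>th j t - th i t\<bar> - thinf i j)^2 \<le> r^2" using r2 by simp
    then have "\<bar>\<bar>th j t - th i t\<bar> - thinf i j\<bar> \<le> r" using rnn
      by (metis abs_le_square_iff abs_of_nonneg)
    then show ?thesis using m_le[OF that(2-4)] le_Max[OF that(2-4)] U_eq by linarith
  qed
  define good where "good t \<longleftrightarrow> (\<forall>i\<in>I. \<forall>j\<in>I. i \<noteq> j \<longrightarrow>
      th j t - th i t \<noteq> 0 \<and> 0 < k0 * cos (th j t - th i t) + k1)" for t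
  have cosU: "cos U \<le> cos x" if "\<bar>x\<bar> \<le> U" for x
  proof -
    have "cos U \<le> cos \<bar>x\<bar>" using that U_pi by (intro cos_monotone_0_pi_le) auto
    then show ?thesis by simp
  qed
  have bound_good: "good t" if "E t \<le> E0" for t
    unfolding good_def
  proof (intro ballI impI conjI)
    fix i j assume ij: "i \<in> I" "j \<in> I" "i \<noteq> j"
    note kb = keybound[OF that ij]
    show "th j t - th i t \<noteq> 0" using kb rlt by auto
    have "k0 * cos U \<le> k0 * cos (th j t - th i t)" using kb cosU k0 by (intro mult_left_mono) auto
    then show "0 < k0 * cos (th j t - th i t) + k1" using coup by linarith
  qed
  have cont_th: "continuous_on S (th i)" if "i \<in> I" for i
    unfolding continuous_on_eq_continuous_within
    using ode_th that DERIV_continuous unfolding S_def I_def by blast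
  have cont_om: "continuous_on S (om i)" if "i \<in> I" for i
    unfolding continuous_on_eq_continuous_within
    using ode_om that DERIV_continuous unfolding S_def I_def by blast
  have cont_E: "continuous_on S E"
    unfolding E_def kur_energy_def I_def[symmetric]
    by (intro continuous_intros cont_th cont_om) auto
  define a where "a t i j = k0 * cos (th j t - th i t) + k1" for t i j
  define b where "b t i j = (\<bar>th j t - th i t\<bar> - thinf i j) * sgn (th j t - th i t)" for t i j
  define D where "D t = 1/2 * (\<Sum>i\<in>I. 2 * om i t * ((1/real N) * (\<Sum>j\<in>I. a t i j * (om j t - om i t)) + k2/real N * (\<Sum>j\<in>I. b t i j)))
     + k2/(4*real N) * (\<Sum>i\<in>I. \<Sum>j\<in>I. 2 * b t i j * (om j t - om i t))" for t
  have derivE: "(E has_real_derivative D t) (at t within S)" if "t \<in> S" "good t" for t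
  proof -
    have t: "0 \<le> t" "ereal t < \<tau>" using that(1) unfolding S_def by auto
    have h1: "((\<lambda>t. (om i t)^2) has_real_derivative 2 * om i t * ((1/real N) * (\<Sum>j\<in>I. a t i j * (om j t - om i t)) + k2/real N * (\<Sum>j\<in>I. b t i j))) (at t within S)"
      if "i \<in> I" for i
      using DERIV_power[OF ode_om[OF that[unfolded I_def] t], of 2]
      unfolding S_def kur_rhs_def a_def b_def I_def by (simp add: mult_ac)
    have h2: "((\<lambda>t. (\<bar>th j t - th i t\<bar> - thinf i j)^2) has_real_derivative 2 * b t i j * (om j t - om i t)) (at t within S)"
      if "i \<in> I" "j \<in> I" for i j
    proof (cases "i = j")
      case True
      then show ?thesis unfolding b_def by simp
    next
      case False
      have nz: "th j t - th i t \<noteq> 0" using \<open>good t\<close> False that unfolding good_def by auto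
      have dd: "((\<lambda>t. th j t - th i t) has_real_derivative om j t - om i t) (at t within S)"
        using DERIV_diff[OF ode_th[OF that(2)[unfolded I_def] t] ode_th[OF that(1)[unfolded I_def] t]]
        unfolding S_def by simp
      show ?thesis using absterm_deriv[OF dd nz, of "thinf i j"] unfolding b_def
        by (rule DERIV_cong) (simp add: mult.assoc)
    qed
    have "((\<lambda>t. 1/2 * (\<Sum>i\<in>I. (om i t)^2) + k2 / (4 * real N) * (\<Sum>i\<in>I. \<Sum>j\<in>I. (\<bar>th j t - th i t\<bar> - thinf i j)^2))
       has_real_derivative D t) (at t within S)"
      unfolding D_def
      by (intro DERIV_add DERIV_cmult DERIV_sum h1 h2)
    then show ?thesis unfolding E_def kur_energy_def I_def by simp
  qed
  have Dnp: "D t \<le> 0" if "good t" for t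
    unfolding D_def
  proof (rule D_nonpos[OF finI _ _ _ Npos])
    fix i j assume ij: "i \<in> I" "j \<in> I"
    show "a t i j = a t j i" unfolding a_def by (metis cos_minus minus_diff_eq)
    have sg: "sgn (th j t - th i t) = - sgn (th i t - th j t)" by (metis minus_diff_eq sgn_minus)
    show "b t i j = - b t j i" unfolding b_def using symm[of i j] ij sg
      by (simp add: I_def abs_minus_commute)
    show "0 \<le> a t i j"
    proof (cases "i = j")
      case True then show ?thesis unfolding a_def using k0 k1 by simp
    next
      case False then show ?thesis using that ij unfolding good_def a_def by force
    qed
  qed
  have inv: "E t \<le> E0" if "t \<in> S" for t
  proof (rule ccontr)
    assume "\<not> E t \<le> E0"
    then have Et: "E0 < E t" by simp
    define t1 where "t1 = t"
    have t1S: "t1 \<in> S" using that t1_def by simp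
    define B where "B = {u. 0 \<le> u \<and> u \<le> t1 \<and> E0 < E u}"
    define s where "s = Inf B"
    have Bne: "B \<noteq> {}" using Et t1S unfolding B_def t1_def S_def by auto
    have Bbdd: "bdd_below B" unfolding B_def by (rule bdd_belowI[of _ 0]) auto
    have s0: "0 \<le> s" unfolding s_def using Bne by (rule cInf_greatest) (auto simp: B_def)
    have st1: "s \<le> t1" unfolding s_def using Et t1S Bbdd
      by (intro cInf_lower) (auto simp: B_def t1_def S_def)
    have below: "E u \<le> E0" if "0 \<le> u" "u < s" for u
    proof (rule ccontr)
      assume "\<not> E u \<le> E0"
      then have "u \<in> B" unfolding B_def using that st1 by auto
      then have "s \<le> u" unfolding s_def using Bbdd by (rule cInf_lower)
      then show False using that by simp
    qed
    have sub: "{0..x} \<subseteq> S" if "x \<le> t1" for x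
    proof
      fix y assume "y \<in> {0..x}"
      then have "0 \<le> y" "ereal y \<le> ereal t1" using that by auto
      moreover have "ereal t1 < \<tau>" using t1S unfolding S_def by auto
      ultimately show "y \<in> S" unfolding S_def using le_less_trans by blast
    qed
    have sS: "s \<in> S" using sub[OF st1] s0 by auto
    have Es: "E s \<le> E0"
    proof (cases "s = 0")
      case True then show ?thesis using E_0 by simp
    next
      case False
      then have spos: "0 < s" using s0 by simp
      have "continuous_on {0..s} E" using cont_E sub[OF st1] by (rule continuous_on_subset)
      then have "(E \<longlongrightarrow> E s) (at s within {0..s})" using s0
        by (simp add: continuous_on_def)
      then have lim: "(E \<longlongrightarrow> E s) (at_left s)" using at_within_Icc_at_left[OF spos] by simp
      have ev: "eventually (\<lambda>u. E u \<le> E0) (at_left s)"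
        using eventually_at_left_real[OF spos] by eventually_elim (auto intro: below)
      show ?thesis using tendsto_upperbound[OF lim ev] by simp
    qed
    have st1': "s < t1" using st1 Es Et t1_def by (cases "s = t1") auto
    have gs: "good s" using bound_good[OF Es] .
    have evg: "eventually good (at s within S)"
    proof -
      have "\<forall>i\<in>I. eventually (\<lambda>u. \<forall>j\<in>I. i \<noteq> j \<longrightarrow> th j u - th i u \<noteq> 0 \<and> 0 < k0 * cos (th j u - th i u) + k1) (at s within S)"
      proof
        fix i assume i: "i \<in> I"
        show "eventually (\<lambda>u. \<forall>j\<in>I. i \<noteq> j \<longrightarrow> th j u - th i u \<noteq> 0 \<and> 0 < k0 * cos (th j u - th i u) + k1) (at s within S)"
        proof (rule eventually_ball_finite[OF finI], rule ballI)
          fix j assume j: "j \<in> I"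
          show "eventually (\<lambda>u. i \<noteq> j \<longrightarrow> th j u - th i u \<noteq> 0 \<and> 0 < k0 * cos (th j u - th i u) + k1) (at s within S)"
          proof (cases "i = j")
            case True then show ?thesis by simp
          next
            case False
            have c1: "((\<lambda>u. th j u - th i u) \<longlongrightarrow> th j s - th i s) (at s within S)"
              using cont_th[OF i] cont_th[OF j] sS
              by (intro tendsto_diff) (auto simp: continuous_on_def)
            have c2: "((\<lambda>u. k0 * cos (th j u - th i u) + k1) \<longlongrightarrow> k0 * cos (th j s - th i s) + k1) (at s within S)"
              by (intro tendsto_intros c1)
            have g1: "th j s - th i s \<noteq> 0" and g2: "0 < k0 * cos (th j s - th i s) + k1"
              using gs i j False unfolding good_def by auto
            have "eventually (\<lambda>u. th j u - th i u \<noteq> 0) (at s within S)"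
              using tendsto_imp_eventually_ne[OF c1 g1] .
            moreover have "eventually (\<lambda>u. 0 < k0 * cos (th j u - th i u) + k1) (at s within S)"
              using order_tendstoD(1)[OF c2 g2] .
            ultimately show ?thesis by eventually_elim auto
          qed
        qed
      qed
      then have "eventually (\<lambda>u. \<forall>i\<in>I. \<forall>j\<in>I. i \<noteq> j \<longrightarrow> th j u - th i u \<noteq> 0 \<and> 0 < k0 * cos (th j u - th i u) + k1) (at s within S)"
        by (rule eventually_ball_finite[OF finI])
      then show ?thesis unfolding good_def by simp
    qed
    then obtain d where d: "d > 0" "\<And>x. x \<in> S \<Longrightarrow> x \<noteq> s \<Longrightarrow> dist x s < d \<Longrightarrow> good x"
      unfolding eventually_at by blast
    define c where "c = min (s + d/2) t1"
    have sc: "s < c" unfolding c_def using d st1' by simp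
    have ct1: "c \<le> t1" unfolding c_def by simp
    have goodI: "good u" if "s \<le> u" "u \<le> c" for u
    proof (cases "u = s")
      case True then show ?thesis using gs by simp
    next
      case False
      have "u \<in> S" using sub[OF ct1] that s0 by auto
      moreover have "dist u s < d" using that d(1) unfolding c_def dist_real_def by auto
      ultimately show ?thesis using d(2) False by blast
    qed
    have mono: "E u \<le> E s" if "s \<le> u" "u \<le> c" for u
    proof -
      have "\<exists>x\<in>{s..u}. E u - E s = (\<lambda>h. D x * h) (u - s)"
      proof (rule mvt_very_simple[OF that(1)])
        fix x assume x: "s \<le> x" "x \<le> u"
        have xS: "x \<in> S" using sub[OF ct1] x that s0 by auto
        have "(E has_real_derivative D x) (at x within {s..u})"
        proof (rule DERIV_subset[OF derivE[OF xS goodI]])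
          show "s \<le> x" "x \<le> c" using x that by auto
          show "{s..u} \<subseteq> S" using sub[OF ct1] that s0 by auto
        qed
        then show "(E has_derivative (\<lambda>h. D x * h)) (at x within {s..u})"
          by (simp add: has_field_derivative_def)
      qed
      then obtain x where x: "x \<in> {s..u}" "E u - E s = D x * (u - s)" by auto
      have "D x \<le> 0" using Dnp goodI x(1) that by auto
      then have "D x * (u - s) \<le> 0" using that by (intro mult_nonpos_nonneg) auto
      then show ?thesis using x(2) by simp
    qed
    have "Inf B < c" using sc s_def by simp
    then obtain y where y: "y \<in> B" "y < c" using cInf_less_iff[OF Bne Bbdd] by auto
    have "s \<le> y" unfolding s_def by (rule cInf_lower[OF y(1) Bbdd])
    then have "E y \<le> E0" using mono[of y] y(2) Es by simp
    then show False using y(1) unfolding B_def by simp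
  qed
  have sep: "m - r \<le> \<bar>th i t - th j t\<bar>" if "i \<in> I" "j \<in> I" "i \<noteq> j" "t \<in> S" for i j t
    using keybound[OF inv[OF that(4)] that(1-3)] by (simp add: abs_minus_commute)
  have dpos: "0 < m - r" using rlt by simp
  show ?thesis
  proof (intro conjI ballI impI allI)
    fix i j t assume ij: "i \<in> {1..N}" "j \<in> {1..N}" "i \<noteq> j" and t: "0 \<le> t \<and> ereal t < \<tau>"
    have "t \<in> S" using t unfolding S_def by simp
    then show "th i t \<noteq> th j t" using sep[of i j t] ij dpos unfolding I_def by auto
  next
    fix i j assume ij: "i \<in> {1..N}" "j \<in> {1..N}" "i \<noteq> j" and ti: "\<tau> = \<infinity>"
    show "\<not> ((\<lambda>t. th i t - th j t) \<longlongrightarrow> 0) at_top"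
    proof
      assume lim: "((\<lambda>t. th i t - th j t) \<longlongrightarrow> 0) at_top"
      have "eventually (\<lambda>t. dist (th i t - th j t) 0 < m - r) at_top"
        using tendstoD[OF lim dpos] .
      moreover have "eventually (\<lambda>t. (0::real) \<le> t) at_top" by (rule eventually_ge_at_top)
      ultimately have "eventually (\<lambda>t. False) (at_top :: real filter)"
      proof eventually_elim
        case (elim t)
        then have "t \<in> S" unfolding S_def using ti by simp
        then show False using sep[of i j t] ij elim unfolding I_def by simp
      qed
      then show False by simp
    qed
  next
    fix i j assume ij: "i \<in> {1..N}" "j \<in> {1..N}" "i \<noteq> j" and ti: "\<tau> \<noteq> \<infinity>"
    obtain T where T: "\<tau> = ereal T" using ti tau by (cases \<tau>) auto
    have Tpos: "0 < T" using tau T by simp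
    show "\<not> ((\<lambda>t. th i t - th j t) \<longlongrightarrow> 0) (at_left (real_of_ereal \<tau>))"
    proof
      assume "((\<lambda>t. th i t - th j t) \<longlongrightarrow> 0) (at_left (real_of_ereal \<tau>))"
      then have lim: "((\<lambda>t. th i t - th j t) \<longlongrightarrow> 0) (at_left T)" using T by simp
      have "eventually (\<lambda>t. dist (th i t - th j t) 0 < m - r) (at_left T)"
        using tendstoD[OF lim dpos] .
      moreover have "eventually (\<lambda>t. t \<in> {0<..<T}) (at_left T)" by (rule eventually_at_left_real[OF Tpos])
      ultimately have "eventually (\<lambda>t. False) (at_left T)"
      proof eventually_elim
        case (elim t)
        then have "t \<in> S" unfolding S_def using T by simp
        then show False using sep[of i j t] ij elim unfolding I_def by simp
      qed
      then show False by simp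
    qed
  qed
qed

end
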